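(* Let $n$, $k$, $t$ be positive integers with $k\geq t+1$ and $n\geq 2k$, and let $V$ be an $n$-dimensional vector space over $\mathbb{F}_q$. Suppose $\mathcal{F}\subseteq{V\brack k}$ is almost $t$-intersecting. If $A$ is a subspace of $V$ with $\dim(A)<\tau_t(\mathcal{F})\leq k$, then $$|\mathcal{F}_A|\leq{k-t+1\brack 1}^{\tau_t(\mathcal{F})-\dim(A)}{n-\tau_t(\mathcal{F})\brack k-\tau_t(\mathcal{F})}+\sum_{i=0}^{\tau_t(\mathcal{F})-\dim(A)-1}{k-t+1\brack 1}^{i}.$$
   Context: $q$ is a prime power; ${W\brack k}$ is the set of $k$-dimensional subspaces of $W$ and ${m\brack r}$ the Gaussian binomial coefficient $\prod_{i=0}^{r-1}\frac{q^{m-i}-1}{q^{r-i}-1}$ (equal to $1$ for $r=0$). A family $\mathcal{F}\subseteq{V\brack k}$ is almost $t$-intersecting if for each $F\in\mathcal{F}$ there is at most one $F'\in\mathcal{F}$ with $\dim(F\cap F')<t$. A subspace $W$ is a $t$-cover of $\mathcal{F}$ if $\dim(W\cap F)\geq t$ for all $F\in\mathcal{F}$; $\tau_t(\mathcal{F})$ is the minimum dimension of a $t$-cover of $\mathcal{F}$. $\mathcal{F}_A=\{F\in\mathcal{F}: A\subseteq F\}$. *)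

theory Defs
  imports "HOL-Analysis.Analysis"
begin

text \<open>Ambient space: V = 'a ^ 'n, where 'a is a finite field (so q = CARD('a)
  is a prime power) and n = CARD('n).\<close>

definition gaussian_binom :: "nat \<Rightarrow> nat \<Rightarrow> nat \<Rightarrow> real" where
  "gaussian_binom q m r =
     (\<Prod>i<r. (real q ^ (m - i) - 1) / (real q ^ (r - i) - 1))"

definition subspaces_of_dim :: "nat \<Rightarrow> ('a::field ^ 'n) set set" where
  "subspaces_of_dim k = {W. vec.subspace W \<and> vec.dim W = k}"

definition almost_t_intersecting :: "nat \<Rightarrow> ('a::field ^ 'n) set set \<Rightarrow> bool" where
  "almost_t_intersecting t \<F> \<longleftrightarrow>
     (\<forall>F\<in>\<F>. card {F'\<in>\<F>. vec.dim (F \<inter> F') < t} \<le> 1)"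

definition is_t_cover :: "nat \<Rightarrow> ('a::field ^ 'n) set set \<Rightarrow> ('a ^ 'n) set \<Rightarrow> bool" where
  "is_t_cover t \<F> W \<longleftrightarrow> vec.subspace W \<and> (\<forall>F\<in>\<F>. vec.dim (W \<inter> F) \<ge> t)"

definition tau :: "nat \<Rightarrow> ('a::field ^ 'n) set set \<Rightarrow> nat" where
  "tau t \<F> = (LEAST d. \<exists>W. is_t_cover t \<F> W \<and> vec.dim W = d)"

definition family_containing :: "('a::field ^ 'n) set set \<Rightarrow> ('a ^ 'n) set \<Rightarrow> ('a ^ 'n) set set" where
  "family_containing \<F> A = {F\<in>\<F>. A \<subseteq> F}"

end

theory Submission
  imports Defs
begin

lemma card_field_ge2: "CARD('a::{field,finite}) \<ge> 2"
proof -
  have "card {0::'a, 1} \<le> CARD('a)" by (rule card_mono) auto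
  then show ?thesis by simp
qed

lemma card_span_indep:
  fixes B :: "('a::{field,finite} ^ 'n) set"
  assumes "vec.independent B"
  shows "card (vec.span B) = CARD('a) ^ card B"
proof -
  have "finite B" using assms vec.finiteI_independent by blast
  then show ?thesis using assms
  proof (induction B rule: finite_induct)
    case empty then show ?case by simp
  next
    case (insert x B)
    have indB: "vec.independent B" and xnot: "x \<notin> vec.span B"
      using insert.prems insert.hyps by (metis vec.independent_insert)+
    have eq: "vec.span (insert x B) = (\<lambda>(c,u). c *s x + u) ` (UNIV \<times> vec.span B)"
    proof -
      have "vec.span (insert x B) = {y. \<exists>c. y - c *s x \<in> vec.span B}" by (rule vec.span_insert)
      also have "\<dots> = (\<lambda>(c,u). c *s x + u) ` (UNIV \<times> vec.span B)"
      proof (intro set_eqI iffI)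
        fix y assume "y \<in> {y. \<exists>c. y - c *s x \<in> vec.span B}"
        then obtain c where c: "y - c *s x \<in> vec.span B" by blast
        then show "y \<in> (\<lambda>(c,u). c *s x + u) ` (UNIV \<times> vec.span B)"
          by (intro image_eqI[of _ _ "(c, y - c *s x)"]) auto
      next
        fix y assume "y \<in> (\<lambda>(c,u). c *s x + u) ` (UNIV \<times> vec.span B)"
        then obtain a b where "y = a *s x + b" "b \<in> vec.span B" by auto
        then show "y \<in> {y. \<exists>c. y - c *s x \<in> vec.span B}" by (auto intro!: exI[of _ a])
      qed
      finally show ?thesis .
    qed
    have inj: "inj_on (\<lambda>(c,u). c *s x + u) (UNIV \<times> vec.span B)"
    proof (rule inj_onI, clarify)
      fix c u c' u'
      assume u: "u \<in> vec.span B" and u': "u' \<in> vec.span B" and e: "c *s x + u = c' *s x + u'"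
      then have "(c - c') *s x = u' - u" by (simp add: algebra_simps vec.scale_left_diff_distrib)
      moreover have "u' - u \<in> vec.span B" using u u' vec.span_diff by blast
      ultimately have "(c - c') *s x \<in> vec.span B" by simp
      then have "c - c' = 0"
        using xnot vec.span_scale[of "(c - c') *s x" B "inverse (c - c')"]
        by (metis vec.scale_scale left_inverse vec.scale_one)
      then show "c = c' \<and> u = u'" using e by simp
    qed
    have "card (vec.span (insert x B)) = card ((UNIV::'a set) \<times> vec.span B)"
      unfolding eq using card_image[OF inj] by simp
    also have "\<dots> = CARD('a) * card (vec.span B)" by (simp add: card_cartesian_product)
    finally show ?case using insert.IH[OF indB] insert.hyps by simp
  qed
qed

lemma card_subspace:
  fixes S :: "('a::{field,finite} ^ 'n) set"
  assumes "vec.subspace S"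
  shows "card S = CARD('a) ^ vec.dim S"
proof -
  obtain B where "B \<subseteq> S" "vec.independent B" "vec.span B = S" "card B = vec.dim S"
    using vec.basis_subspace_exists[OF assms] by metis
  then show ?thesis using card_span_indep by metis
qed

lemma card_fibres:
  assumes "finite D" "finite T" "\<And>y. y \<in> T \<Longrightarrow> m \<le> card {x\<in>D. f x = y}"
  shows "card T * m \<le> card D"
proof -
  have "card T * m = (\<Sum>y\<in>T. m)" by simp
  also have "\<dots> \<le> (\<Sum>y\<in>T. card {x\<in>D. f x = y})" by (rule sum_mono) (use assms in auto)
  also have "\<dots> = card (\<Union>y\<in>T. {x\<in>D. f x = y})"
    by (rule card_UN_disjoint[symmetric]) (use assms in auto)
  also have "\<dots> \<le> card D" by (rule card_mono) (use assms in auto)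
  finally show ?thesis .
qed

lemma dim_Un_le:
  fixes W X :: "('a::field ^ 'n) set"
  assumes "finite X"
  shows "vec.dim (W \<union> X) \<le> vec.dim W + card X"
  using assms
proof (induction X rule: finite_induct)
  case empty then show ?case by simp
next
  case (insert x X)
  have "vec.dim (W \<union> insert x X) = vec.dim (insert x (W \<union> X))" by simp
  also have "\<dots> \<le> vec.dim (W \<union> X) + 1" by (simp add: vec.dim_insert)
  finally show ?case using insert by simp
qed

definition seqs :: "('a::field ^ 'n) set \<Rightarrow> ('a ^ 'n) set \<Rightarrow> nat \<Rightarrow> ('a ^ 'n) list set" where
  "seqs U S r = {xs. length xs = r \<and> set xs \<subseteq> S \<and> vec.dim (U \<union> set xs) = vec.dim U + r}"

lemma dim_cons_eq:
  fixes U :: "('a::field ^ 'n) set"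
  shows "vec.dim (U \<union> set (x # ys)) = vec.dim (vec.span (insert x U) \<union> set ys)"
proof (rule vec.span_eq_dim)
  show "vec.span (U \<union> set (x # ys)) = vec.span (vec.span (insert x U) \<union> set ys)"
  proof (subst vec.span_eq, intro conjI)
    show "U \<union> set (x # ys) \<subseteq> vec.span (vec.span (insert x U) \<union> set ys)"
      by (auto intro: vec.span_base)
    have "vec.span (insert x U) \<subseteq> vec.span (U \<union> set (x # ys))" by (rule vec.span_mono) auto
    then show "vec.span (insert x U) \<union> set ys \<subseteq> vec.span (U \<union> set (x # ys))"
      by (auto intro: vec.span_base)
  qed
qed

lemma dim_list_le:
  fixes U :: "('a::field ^ 'n) set"
  shows "vec.dim (U \<union> set ys) \<le> vec.dim U + length ys"
  using dim_Un_le[of "set ys" U] card_length[of ys] by simp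

lemma seqs_Suc:
  fixes U :: "('a::field ^ 'n) set"
  assumes U: "vec.subspace U"
  shows "seqs U S (Suc r) = (\<Union>x\<in>S - U. (#) x ` seqs (vec.span (insert x U)) S r)"
proof (intro set_eqI iffI)
  fix xs assume "xs \<in> seqs U S (Suc r)"
  then obtain x ys where xs: "xs = x # ys" and len: "length ys = r" and xS: "x \<in> S"
    and yS: "set ys \<subseteq> S" and d: "vec.dim (U \<union> set (x # ys)) = vec.dim U + Suc r"
    unfolding seqs_def by (cases xs) auto
  have xU: "x \<notin> U"
  proof
    assume "x \<in> U"
    then have "vec.span (insert x U) = U" using U by (simp add: insert_absorb vec.span_eq_iff)
    then have "vec.dim (U \<union> set ys) = vec.dim U + Suc r" using d dim_cons_eq by metis
    then show False using dim_list_le[of U ys] len by simp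
  qed
  have dx: "vec.dim (vec.span (insert x U)) = vec.dim U + 1"
    using xU U vec.span_eq_iff[of U] by (metis vec.dim_insert vec.dim_span)
  have "ys \<in> seqs (vec.span (insert x U)) S r"
    unfolding seqs_def using len yS d dim_cons_eq[of U x ys] dx by simp
  then show "xs \<in> (\<Union>x\<in>S - U. (#) x ` seqs (vec.span (insert x U)) S r)"
    using xS xU xs by blast
next
  fix xs assume "xs \<in> (\<Union>x\<in>S - U. (#) x ` seqs (vec.span (insert x U)) S r)"
  then obtain x ys where xs: "xs = x # ys" and xS: "x \<in> S" and xU: "x \<notin> U"
    and ys: "ys \<in> seqs (vec.span (insert x U)) S r" by blast
  have dx: "vec.dim (vec.span (insert x U)) = vec.dim U + 1"
    using xU U vec.span_eq_iff[of U] by (metis vec.dim_insert vec.dim_span)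
  show "xs \<in> seqs U S (Suc r)"
    using ys xS dx dim_cons_eq[of U x ys] unfolding seqs_def xs by simp
qed

lemma finite_seqs: "finite (seqs U (S::('a::{field,finite} ^ 'n) set) r)"
proof -
  have "seqs U S r \<subseteq> {xs. set xs \<subseteq> S \<and> length xs = r}" unfolding seqs_def by auto
  then show ?thesis using finite_lists_length_eq[of S r] finite by (metis rev_finite_subset)
qed

lemma dim_insert_subspace:
  fixes U :: "('a::field ^ 'n) set"
  assumes "vec.subspace U" "x \<notin> U"
  shows "vec.dim (vec.span (insert x U)) = vec.dim U + 1"
  using assms vec.span_eq_iff[of U] by (metis vec.dim_insert vec.dim_span)

lemma card_seqs:
  fixes U S :: "('a::{field,finite} ^ 'n) set"
  assumes "vec.subspace U" "vec.subspace S" "U \<subseteq> S" "vec.dim U + r \<le> vec.dim S"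
  shows "card (seqs U S r) = (\<Prod>i<r. CARD('a) ^ vec.dim S - CARD('a) ^ (vec.dim U + i))"
  using assms
proof (induction r arbitrary: U)
  case 0
  have "seqs U S 0 = {[]}" unfolding seqs_def by auto
  then show ?case by simp
next
  case (Suc r)
  let ?q = "CARD('a)" and ?s = "vec.dim S" and ?u = "vec.dim U"
  have each: "card (seqs (vec.span (insert x U)) S r) = (\<Prod>i<r. ?q ^ ?s - ?q ^ (?u + Suc i))"
    if x: "x \<in> S - U" for x
  proof -
    have d: "vec.dim (vec.span (insert x U)) = ?u + 1"
      using dim_insert_subspace[OF Suc.prems(1)] x by blast
    have sub: "vec.span (insert x U) \<subseteq> S"
      using x Suc.prems(2,3) by (intro vec.span_minimal) auto
    have "card (seqs (vec.span (insert x U)) S r) = (\<Prod>i<r. ?q ^ ?s - ?q ^ (vec.dim (vec.span (insert x U)) + i))"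
      by (rule Suc.IH) (use Suc.prems d sub in auto)
    then show ?thesis using d by simp
  qed
  have "card (seqs U S (Suc r)) = card (\<Union>x\<in>S - U. (#) x ` seqs (vec.span (insert x U)) S r)"
    using seqs_Suc[OF Suc.prems(1)] by simp
  also have "\<dots> = (\<Sum>x\<in>S - U. card ((#) x ` seqs (vec.span (insert x U)) S r))"
    by (rule card_UN_disjoint) (auto simp: finite_seqs)
  also have "\<dots> = (\<Sum>x\<in>S - U. card (seqs (vec.span (insert x U)) S r))"
    by (rule sum.cong) (auto simp: card_image)
  also have "\<dots> = (\<Sum>x\<in>S - U. (\<Prod>i<r. ?q ^ ?s - ?q ^ (?u + Suc i)))"
    by (rule sum.cong) (use each in auto)
  also have "\<dots> = card (S - U) * (\<Prod>i<r. ?q ^ ?s - ?q ^ (?u + Suc i))" by simp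
  also have "card (S - U) = ?q ^ ?s - ?q ^ ?u"
    using card_Diff_subset[OF _ Suc.prems(3)] card_subspace[OF Suc.prems(1)] card_subspace[OF Suc.prems(2)]
    by simp
  also have "(?q ^ ?s - ?q ^ ?u) * (\<Prod>i<r. ?q ^ ?s - ?q ^ (?u + Suc i)) = (\<Prod>i<Suc r. ?q ^ ?s - ?q ^ (?u + i))"
    by (simp only: prod.lessThan_Suc_shift add_0_right)
  finally show ?case .
qed

lemma factor_eq:
  fixes q :: nat
  assumes q: "q \<ge> 2" and "j \<le> n" "j < k"
  shows "real (q ^ n - q ^ j) / real (q ^ k - q ^ j) = (real q ^ (n - j) - 1) / (real q ^ (k - j) - 1)"
proof -
  have e1: "real (q ^ n - q ^ j) = real q ^ j * (real q ^ (n - j) - 1)"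
  proof -
    have "q ^ j \<le> q ^ n" using assms by (intro power_increasing) auto
    then have "real (q ^ n - q ^ j) = real q ^ n - real q ^ j" by (simp add: of_nat_diff)
    also have "real q ^ n = real q ^ j * real q ^ (n - j)" using assms by (simp flip: power_add)
    finally show ?thesis by (simp add: algebra_simps)
  qed
  have e2: "real (q ^ k - q ^ j) = real q ^ j * (real q ^ (k - j) - 1)"
  proof -
    have "q ^ j \<le> q ^ k" using assms by (intro power_increasing) auto
    then have "real (q ^ k - q ^ j) = real q ^ k - real q ^ j" by (simp add: of_nat_diff)
    also have "real q ^ k = real q ^ j * real q ^ (k - j)" using assms by (simp flip: power_add)
    finally show ?thesis by (simp add: algebra_simps)
  qed
  have "real q ^ j > 0" using q by simp
  then show ?thesis unfolding e1 e2 by (metis mult_divide_mult_cancel_left_if less_irrefl)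
qed

lemma count_superspaces:
  fixes A :: "('a::{field,finite} ^ 'n) set"
  assumes A: "vec.subspace A" and dA: "vec.dim A = d" and dk: "d \<le> k" and kn: "k \<le> CARD('n)"
  shows "real (card {W. vec.subspace W \<and> vec.dim W = k \<and> A \<subseteq> W})
     \<le> gaussian_binom CARD('a) (CARD('n) - d) (k - d)"
proof -
  let ?q = "CARD('a)" and ?n = "CARD('n)"
  let ?T = "{W. vec.subspace W \<and> vec.dim W = k \<and> A \<subseteq> W}"
  let ?D = "seqs A UNIV (k - d)"
  let ?Pk = "\<Prod>i<k - d. ?q ^ k - ?q ^ (d + i)"
  let ?Pn = "\<Prod>i<k - d. ?q ^ ?n - ?q ^ (d + i)"
  have q2: "?q \<ge> 2" by (rule card_field_ge2)
  have cD: "card ?D = ?Pn"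
    using card_seqs[OF A vec.subspace_UNIV, of "k - d"] dA dk kn unfolding vec_dim_card by simp
  have fib: "?Pk \<le> card {xs\<in>?D. vec.span (A \<union> set xs) = W}" if W: "W \<in> ?T" for W
  proof -
    have Wsub: "vec.subspace W" and dW: "vec.dim W = k" and AW: "A \<subseteq> W" using W by auto
    have c1: "card (seqs A W (k - d)) = ?Pk"
      using card_seqs[OF A Wsub AW, of "k - d"] dA dW dk by simp
    have s1: "seqs A W (k - d) \<subseteq> {xs\<in>?D. vec.span (A \<union> set xs) = W}"
    proof
      fix xs assume xs: "xs \<in> seqs A W (k - d)"
      then have sx: "set xs \<subseteq> W" and dx: "vec.dim (A \<union> set xs) = k" and lx: "length xs = k - d"
        unfolding seqs_def using dA dk by auto
      have sub: "vec.span (A \<union> set xs) \<subseteq> W" using sx AW Wsub by (intro vec.span_minimal) auto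
      have "vec.span (vec.span (A \<union> set xs)) = vec.span W"
        by (rule vec.dim_eq_span[OF sub]) (simp add: dx dW)
      then have "vec.span (A \<union> set xs) = vec.span W" by (simp only: vec.span_span)
      also have "vec.span W = W" using Wsub vec.span_eq_iff by blast
      finally have "vec.span (A \<union> set xs) = W" .
      then show "xs \<in> {xs\<in>?D. vec.span (A \<union> set xs) = W}" using xs unfolding seqs_def by auto
    qed
    have f1: "finite {xs\<in>?D. vec.span (A \<union> set xs) = W}" using finite_seqs[of A UNIV "k - d"] by simp
    show ?thesis using card_mono[OF f1 s1] unfolding c1 .
  qed
  have "card ?T * ?Pk \<le> card ?D"
    by (rule card_fibres[where f = "\<lambda>xs. vec.span (A \<union> set xs)"]) (rule finite_seqs, rule finite, erule fib)
  then have "card ?T * ?Pk \<le> ?Pn" using cD by simp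
  then have "real (card ?T * ?Pk) \<le> real ?Pn" by (rule of_nat_mono)
  then have le: "real (card ?T) * real ?Pk \<le> real ?Pn" by (simp only: of_nat_mult)
  have pos: "real ?Pk > 0"
  proof -
    have "?Pk > 0"
    proof (rule prod_pos)
      fix i assume "i \<in> {..<k - d}"
      then have "d + i < k" by auto
      then have "?q ^ (d + i) < ?q ^ k" using q2 by (intro power_strict_increasing) auto
      then show "0 < ?q ^ k - ?q ^ (d + i)" by simp
    qed
    then show ?thesis by (simp only: of_nat_0_less_iff)
  qed
  have "real (card ?T) \<le> real ?Pn / real ?Pk" by (subst pos_le_divide_eq[OF pos]) (rule le)
  also have "\<dots> = (\<Prod>i<k - d. real (?q ^ ?n - ?q ^ (d + i)) / real (?q ^ k - ?q ^ (d + i)))"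
    by (simp only: of_nat_prod prod_dividef)
  also have "\<dots> = (\<Prod>i<k - d. (real ?q ^ (?n - d - i) - 1) / (real ?q ^ (k - d - i) - 1))"
  proof (rule prod.cong[OF refl])
    fix i assume "i \<in> {..<k - d}"
    then have "d + i \<le> ?n" "d + i < k" using kn by auto
    then show "real (?q ^ ?n - ?q ^ (d + i)) / real (?q ^ k - ?q ^ (d + i)) =
      (real ?q ^ (?n - d - i) - 1) / (real ?q ^ (k - d - i) - 1)"
      using factor_eq[OF q2, of "d + i" ?n k] by (simp add: diff_diff_add)
  qed
  also have "\<dots> = gaussian_binom ?q (?n - d) (k - d)" unfolding gaussian_binom_def by simp
  finally show ?thesis .
qed

lemma gaussian_binom_1: "gaussian_binom q m 1 = (real q ^ m - 1) / (real q - 1)"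
  unfolding gaussian_binom_def by simp

lemma count_lines:
  fixes P A :: "('a::{field,finite} ^ 'n) set"
  assumes P: "vec.subspace P"
  shows "real (card ((\<lambda>x. vec.span (insert x A)) ` (P - {0}))) \<le> gaussian_binom CARD('a) (vec.dim P) 1"
proof -
  let ?q = "CARD('a)" and ?f = "\<lambda>x. vec.span (insert x A)"
  let ?T = "?f ` (P - {0})"
  have q2: "?q \<ge> 2" by (rule card_field_ge2)
  have fib: "?q - 1 \<le> card {x\<in>P - {0}. ?f x = y}" if y: "y \<in> ?T" for y
  proof -
    obtain x0 where x0: "x0 \<in> P" "x0 \<noteq> 0" and yx: "y = ?f x0" using y by blast
    have sub: "(\<lambda>c. c *s x0) ` (UNIV - {0}) \<subseteq> {x\<in>P - {0}. ?f x = y}"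
    proof (rule image_subsetI)
      fix c :: 'a assume "c \<in> UNIV - {0}"
      then have c: "c \<noteq> 0" by simp
      have "c *s x0 \<in> P" using P x0 vec.subspace_scale by blast
      moreover have "c *s x0 \<noteq> 0" using c x0 by simp
      moreover have "?f (c *s x0) = ?f x0"
      proof (subst vec.span_eq, intro conjI)
        show "insert (c *s x0) A \<subseteq> vec.span (insert x0 A)"
          by (auto intro: vec.span_base vec.span_scale)
        have "x0 = inverse c *s (c *s x0)" using c by simp
        then have "x0 \<in> vec.span (insert (c *s x0) A)"
          by (metis insertI1 vec.span_base vec.span_scale)
        then show "insert x0 A \<subseteq> vec.span (insert (c *s x0) A)"
          by (auto intro: vec.span_base)
      qed
      ultimately show "c *s x0 \<in> {x\<in>P - {0}. ?f x = y}" using yx by simp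
    qed
    have inj: "inj_on (\<lambda>c. c *s x0) (UNIV - {0})" using x0 by (auto intro: inj_onI)
    have "card ((\<lambda>c. c *s x0) ` (UNIV - {0})) = ?q - 1"
      using card_image[OF inj] by (simp add: card_Diff_singleton)
    moreover have "finite {x\<in>P - {0}. ?f x = y}" by simp
    ultimately show ?thesis using card_mono[OF _ sub] by metis
  qed
  have "card ?T * (?q - 1) \<le> card (P - {0})"
    by (rule card_fibres[where f = ?f]) (rule finite, rule finite, erule fib)
  also have "card (P - {0}) = ?q ^ vec.dim P - 1"
    using card_subspace[OF P] vec.subspace_0[OF P] by (simp add: card_Diff_singleton)
  finally have le: "card ?T * (?q - 1) \<le> ?q ^ vec.dim P - 1" .
  have qp: "?q ^ vec.dim P \<ge> 1" using q2 by simp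
  have "real (card ?T) * (real ?q - 1) \<le> real ?q ^ vec.dim P - 1"
  proof -
    have "real (card ?T * (?q - 1)) \<le> real (?q ^ vec.dim P - 1)" using le by (rule of_nat_mono)
    then show ?thesis using q2 qp by (simp add: of_nat_diff)
  qed
  then show ?thesis unfolding gaussian_binom_1 using q2 by (simp add: pos_le_divide_eq)
qed

lemma exists_transversal:
  fixes A F0 :: "('a::field ^ 'n) set"
  assumes A: "vec.subspace A" and F0: "vec.subspace F0" and dF: "vec.dim F0 = k"
    and dAF: "vec.dim (A \<inter> F0) < t" and tk: "t \<le> k"
  obtains P where "vec.subspace P" "P \<subseteq> F0" "vec.dim P = k - t + 1" "P \<inter> A \<subseteq> {0}"
proof -
  have AF: "vec.subspace (A \<inter> F0)" using A F0 by (rule vec.subspace_inter)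
  obtain BA where BA: "finite BA" "BA \<subseteq> A \<inter> F0" "vec.independent BA" "vec.span BA = A \<inter> F0"
    "card BA = vec.dim (A \<inter> F0)"
    using vec.basis_subspace_exists[OF AF] by metis
  obtain BF where BF: "BA \<subseteq> BF" "BF \<subseteq> F0" "vec.independent BF" "F0 \<subseteq> vec.span BF"
    using vec.maximal_independent_subset_extend[of BA F0] BA by blast
  have fBF: "finite BF" using BF vec.finiteI_independent by blast
  have cBF: "card BF = k" using vec.basis_card_eq_dim[of BF F0] BF dF by simp
  have "card (BF - BA) = k - card BA" using card_Diff_subset[OF BA(1) BF(1)] cBF by simp
  then have "k - t + 1 \<le> card (BF - BA)" using dAF BA(5) tk by simp
  then obtain S where S: "S \<subseteq> BF - BA" "card S = k - t + 1"
    using obtain_subset_with_card_n by metis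
  have fS: "finite S" using S fBF by (meson finite_Diff finite_subset)
  have indS: "vec.independent S" using S BF vec.independent_mono by blast
  have SF: "vec.span S \<subseteq> F0" using S BF F0 by (intro vec.span_minimal) auto
  have "vec.span S \<inter> A \<subseteq> {0}"
  proof -
    have ss: "vec.subspace (vec.span S)" "vec.subspace (vec.span BA)" by (rule vec.subspace_span)+
    have sum: "vec.dim {x + y |x y. x \<in> vec.span S \<and> y \<in> vec.span BA} + vec.dim (vec.span S \<inter> vec.span BA)
        = vec.dim (vec.span S) + vec.dim (vec.span BA)"
      using vec.dim_sums_Int[OF ss] .
    have "{x + y |x y. x \<in> vec.span S \<and> y \<in> vec.span BA} = vec.span (S \<union> BA)"
      by (simp add: vec.span_Un)
    moreover have "vec.independent (S \<union> BA)" using S BF vec.independent_mono[OF BF(3)] by blast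
    moreover have "card (S \<union> BA) = card S + card BA"
      using S fS BA(1) by (intro card_Un_disjoint) auto
    ultimately have "vec.dim {x + y |x y. x \<in> vec.span S \<and> y \<in> vec.span BA} = card S + card BA"
      by (simp add: vec.dim_eq_card_independent)
    moreover have "vec.dim (vec.span S) + vec.dim (vec.span BA) = card S + card BA"
      using indS BA(3) by (simp add: vec.dim_eq_card_independent)
    ultimately have "vec.dim (vec.span S \<inter> vec.span BA) = 0" using sum by simp
    then have "vec.span S \<inter> vec.span BA \<subseteq> {0}" by simp
    moreover have "vec.span S \<inter> A \<subseteq> vec.span S \<inter> vec.span BA" using SF BA(4) by blast
    ultimately show ?thesis by blast
  qed
  moreover have "vec.dim (vec.span S) = k - t + 1" using indS S by (simp add: vec.dim_eq_card_independent)
  ultimately show ?thesis using that[of "vec.span S"] SF vec.subspace_span by blast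
qed

lemma gaussian_nonneg:
  assumes "q \<ge> 1"
  shows "gaussian_binom q m r \<ge> 0"
  unfolding gaussian_binom_def
proof (intro prod_nonneg)
  fix i
  have "real q ^ (m - i) \<ge> 1" "real q ^ (r - i) \<ge> 1" using assms by simp_all
  then show "0 \<le> (real q ^ (m - i) - 1) / (real q ^ (r - i) - 1)" by simp
qed

lemma main_ind:
  fixes \<F> :: "('a::{field,finite} ^ 'n) set set"
  assumes Fk: "\<F> \<subseteq> subspaces_of_dim k" and alm: "almost_t_intersecting t \<F>"
    and tk: "t + 1 \<le> k" and tauk: "tau t \<F> \<le> k" and kn: "k \<le> CARD('n)"
  shows "vec.subspace A \<Longrightarrow> vec.dim A + m = tau t \<F> \<Longrightarrow>
    real (card (family_containing \<F> A))
    \<le> gaussian_binom CARD('a) (k - t + 1) 1 ^ m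
        * gaussian_binom CARD('a) (CARD('n) - tau t \<F>) (k - tau t \<F>)
      + (\<Sum>i<m. gaussian_binom CARD('a) (k - t + 1) 1 ^ i)"
proof (induction m arbitrary: A)
  case 0
  have "family_containing \<F> A \<subseteq> {W. vec.subspace W \<and> vec.dim W = k \<and> A \<subseteq> W}"
    using Fk unfolding family_containing_def subspaces_of_dim_def by auto
  then have "card (family_containing \<F> A) \<le> card {W. vec.subspace W \<and> vec.dim W = k \<and> A \<subseteq> W}"
    by (intro card_mono) auto
  then have "real (card (family_containing \<F> A)) \<le> real (card {W. vec.subspace W \<and> vec.dim W = k \<and> A \<subseteq> W})"
    by (rule of_nat_mono)
  also have "\<dots> \<le> gaussian_binom CARD('a) (CARD('n) - tau t \<F>) (k - tau t \<F>)"
    using count_superspaces[OF 0(1), of "tau t \<F>" k] 0(2) tauk kn by simp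
  finally show ?case by simp
next
  case (Suc m A)
  let ?q = "CARD('a)"
  let ?c = "gaussian_binom ?q (k - t + 1) 1"
  let ?g = "gaussian_binom ?q (CARD('n) - tau t \<F>) (k - tau t \<F>)"
  let ?b = "?c ^ m * ?g + (\<Sum>i<m. ?c ^ i)"
  have q2: "?q \<ge> 2" by (rule card_field_ge2)
  have c0: "?c \<ge> 0" by (rule gaussian_nonneg) (use q2 in simp)
  have g0: "?g \<ge> 0" by (rule gaussian_nonneg) (use q2 in simp)
  have b0: "?b \<ge> 0" using c0 g0 by (intro add_nonneg_nonneg mult_nonneg_nonneg sum_nonneg) auto
  have A: "vec.subspace A" using Suc.prems by simp
  have "\<not> is_t_cover t \<F> A"
  proof
    assume "is_t_cover t \<F> A"
    then have "tau t \<F> \<le> vec.dim A" unfolding tau_def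
      by (intro Least_le exI[of _ A]) simp
    then show False using Suc.prems by simp
  qed
  then have "\<not> (\<forall>F\<in>\<F>. vec.dim (A \<inter> F) \<ge> t)" using A unfolding is_t_cover_def by simp
  then obtain F0 where F0F: "F0 \<in> \<F>" and dAF: "vec.dim (A \<inter> F0) < t"
    by (auto simp: not_le)
  have F0: "vec.subspace F0" "vec.dim F0 = k" using F0F Fk unfolding subspaces_of_dim_def by auto
  obtain P where P: "vec.subspace P" "P \<subseteq> F0" "vec.dim P = k - t + 1" "P \<inter> A \<subseteq> {0}"
    using exists_transversal[OF A F0(1) F0(2) dAF] tk by auto
  let ?f = "\<lambda>x. vec.span (insert x A)"
  let ?Bs = "?f ` (P - {0})"
  let ?E = "{G\<in>\<F>. vec.dim (F0 \<inter> G) < t}"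
  have cover: "family_containing \<F> A \<subseteq> ?E \<union> (\<Union>B\<in>?Bs. family_containing \<F> B)"
  proof
    fix G assume G: "G \<in> family_containing \<F> A"
    then have GF: "G \<in> \<F>" and AG: "A \<subseteq> G" unfolding family_containing_def by auto
    have Gs: "vec.subspace G" using GF Fk unfolding subspaces_of_dim_def by auto
    show "G \<in> ?E \<union> (\<Union>B\<in>?Bs. family_containing \<F> B)"
    proof (cases "vec.dim (F0 \<inter> G) < t")
      case True then show ?thesis using GF by blast
    next
      case False
      let ?H = "F0 \<inter> G"
      have Hs: "vec.subspace ?H" using F0(1) Gs by (rule vec.subspace_inter)
      have sums: "vec.dim {x + y |x y. x \<in> P \<and> y \<in> ?H} + vec.dim (P \<inter> ?H) = vec.dim P + vec.dim ?H"
        using vec.dim_sums_Int[OF P(1) Hs] .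
      have "{x + y |x y. x \<in> P \<and> y \<in> ?H} \<subseteq> F0"
      proof
        fix z assume "z \<in> {x + y |x y. x \<in> P \<and> y \<in> ?H}"
        then obtain x y where "z = x + y" "x \<in> P" "y \<in> ?H" by blast
        then show "z \<in> F0" using P(2) F0(1) vec.subspace_add[of F0 x y] by blast
      qed
      then have "vec.dim {x + y |x y. x \<in> P \<and> y \<in> ?H} \<le> k"
        using vec.dim_subset[of _ F0] F0(2) by simp
      then have d1: "vec.dim (P \<inter> ?H) \<ge> 1" using sums P(3) False tk by linarith
      have "\<not> (P \<inter> ?H \<subseteq> {0})"
      proof
        assume "P \<inter> ?H \<subseteq> {0}"
        then have "vec.dim (P \<inter> ?H) = 0" using vec.dim_eq_0 by blast
        then show False using d1 by linarith
      qed
      then obtain x where x: "x \<in> P" "x \<in> G" "x \<noteq> 0" by blast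
      have "?f x \<subseteq> G" using x AG Gs by (intro vec.span_minimal) auto
      then have "G \<in> family_containing \<F> (?f x)" using GF unfolding family_containing_def by blast
      then show ?thesis using x by blast
    qed
  qed
  have cE: "card ?E \<le> 1" using bspec[OF alm[unfolded almost_t_intersecting_def] F0F] .
  have IHB: "real (card (family_containing \<F> B)) \<le> ?b" if B: "B \<in> ?Bs" for B
  proof -
    obtain x where x: "x \<in> P" "x \<noteq> 0" and Bx: "B = ?f x" using B by blast
    have "x \<notin> A" using x P(4) by blast
    then have "vec.dim B = vec.dim A + 1" using dim_insert_subspace[OF A] Bx by blast
    then show ?thesis using Suc.IH[of B] Bx vec.subspace_span Suc.prems by simp
  qed
  have "card (family_containing \<F> A) \<le> card (?E \<union> (\<Union>B\<in>?Bs. family_containing \<F> B))"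
    using cover by (intro card_mono) auto
  also have "\<dots> \<le> card ?E + card (\<Union>B\<in>?Bs. family_containing \<F> B)" by (rule card_Un_le)
  also have "\<dots> \<le> 1 + (\<Sum>B\<in>?Bs. card (family_containing \<F> B))"
    using cE card_UN_le[of ?Bs "family_containing \<F>"] by simp
  finally have "real (card (family_containing \<F> A)) \<le> real (1 + (\<Sum>B\<in>?Bs. card (family_containing \<F> B)))"
    by (rule of_nat_mono)
  also have "\<dots> = 1 + (\<Sum>B\<in>?Bs. real (card (family_containing \<F> B)))" by simp
  also have "\<dots> \<le> 1 + (\<Sum>B\<in>?Bs. ?b)" using IHB by (intro add_left_mono sum_mono) auto
  also have "\<dots> = 1 + real (card ?Bs) * ?b" by simp
  also have "\<dots> \<le> 1 + ?c * ?b"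
  proof -
    have "real (card ?Bs) \<le> ?c" using count_lines[OF P(1), of A] P(3) by simp
    then show ?thesis using b0 by (intro add_left_mono mult_right_mono) auto
  qed
  also have "\<dots> = ?c ^ Suc m * ?g + (\<Sum>i<Suc m. ?c ^ i)"
    by (simp add: sum.lessThan_Suc_shift sum_distrib_left algebra_simps del: sum.lessThan_Suc)
  finally show ?case .
qed

theorem corollary3p4:
  fixes \<F> :: "('a::{field,finite} ^ 'n) set set"
    and A :: "('a ^ 'n) set"
    and n k t :: nat
  assumes "n = CARD('n)"
    and "0 < t" and "0 < k" and "k \<ge> t + 1" and "n \<ge> 2 * k"
    and "\<F> \<subseteq> subspaces_of_dim k"
    and "almost_t_intersecting t \<F>"
    and "vec.subspace A"
    and "vec.dim A < tau t \<F>" and "tau t \<F> \<le> k"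
  shows "real (card (family_containing \<F> A))
    \<le> gaussian_binom CARD('a) (k - t + 1) 1 ^ (tau t \<F> - vec.dim A)
        * gaussian_binom CARD('a) (n - tau t \<F>) (k - tau t \<F>)
      + (\<Sum>i=0..tau t \<F> - vec.dim A - 1. gaussian_binom CARD('a) (k - t + 1) 1 ^ i)"
proof -
  have kn: "k \<le> CARD('n)" using assms(1,5) by simp
  have eq: "{0..tau t \<F> - vec.dim A - 1} = {..<tau t \<F> - vec.dim A}" using assms(9) by auto
  have "vec.dim A + (tau t \<F> - vec.dim A) = tau t \<F>" using assms(9) by simp
  from main_ind[OF assms(6,7,4,10) kn assms(8) this]
  show ?thesis unfolding eq assms(1) .
qed

end
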